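(* Let $a,b,p,q$ be positive real numbers and consider the system of difference equations $$y_{n+1}=\frac{a z_n}{p+z_n}e^{-y_n},\qquad z_{n+1}=\frac{b y_n}{q+y_n}e^{-z_n},\qquad n=0,1,2,\dots$$ with nonnegative initial values. (i) If $\frac{a}{p}<1$ and $\frac{b}{q}<1$, then the equilibrium $(0,0)$ is locally asymptotically stable. (ii) Suppose $ab>pq$, so that the system has a unique positive equilibrium $(\bar y,\bar z)$. Define $$y^*=\frac{ab-pq}{p+b},\quad z^*=\frac{ab-pq}{q+a},\quad y_*=\frac{ab\,e^{-(y^*+z^* )}-pq}{b e^{-z^*}+p},\quad z_*=\frac{ab\,e^{-(y^*+z^* )}-pq}{a e^{-y^*}+q}.$$ If $e^{y_*}>a$ and $e^{z_*}>b$, then $(\bar y,\bar z)$ is locally asymptotically stable.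
   Context: An equilibrium $(\bar y,\bar z)$ satisfies $\bar y=\frac{a\bar z}{p+\bar z}e^{-\bar y}$, $\bar z=\frac{b\bar y}{q+\bar y}e^{-\bar z}$. It is locally stable if for every $\varepsilon>0$ there is $\delta>0$ such that $|y_0-\bar y|+|z_0-\bar z|<\delta$ implies $|y_n-\bar y|+|z_n-\bar z|<\varepsilon$ for all $n\ge0$; it is locally asymptotically stable if it is locally stable and there is $\gamma>0$ such that $|y_0-\bar y|+|z_0-\bar z|<\gamma$ implies $y_n\to\bar y$, $z_n\to\bar z$. *)

theory Defs
  imports Complex_Main
begin

definition sys_step :: "real \<Rightarrow> real \<Rightarrow> real \<Rightarrow> real \<Rightarrow> real \<times> real \<Rightarrow> real \<times> real" where
  "sys_step a b p q yz =
     (a * snd yz / (p + snd yz) * exp (- fst yz), b * fst yz / (q + fst yz) * exp (- snd yz))"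

definition sys_orbit :: "real \<Rightarrow> real \<Rightarrow> real \<Rightarrow> real \<Rightarrow> real \<Rightarrow> real \<Rightarrow> nat \<Rightarrow> real \<times> real" where
  "sys_orbit a b p q y0 z0 n = (sys_step a b p q ^^ n) (y0, z0)"

definition is_equilibrium :: "real \<Rightarrow> real \<Rightarrow> real \<Rightarrow> real \<Rightarrow> real \<Rightarrow> real \<Rightarrow> bool" where
  "is_equilibrium a b p q ye ze \<longleftrightarrow>
     ye = a * ze / (p + ze) * exp (- ye) \<and> ze = b * ye / (q + ye) * exp (- ze)"

text \<open>Local stability, for nonnegative initial values (the system is only considered for those).\<close>
definition locally_stable :: "real \<Rightarrow> real \<Rightarrow> real \<Rightarrow> real \<Rightarrow> real \<Rightarrow> real \<Rightarrow> bool" where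
  "locally_stable a b p q ye ze \<longleftrightarrow>
     (\<forall>\<epsilon>>0. \<exists>\<delta>>0. \<forall>y0 z0. y0 \<ge> 0 \<and> z0 \<ge> 0 \<and> \<bar>y0 - ye\<bar> + \<bar>z0 - ze\<bar> < \<delta> \<longrightarrow>
        (\<forall>n. \<bar>fst (sys_orbit a b p q y0 z0 n) - ye\<bar> + \<bar>snd (sys_orbit a b p q y0 z0 n) - ze\<bar> < \<epsilon>))"

definition locally_asymptotically_stable :: "real \<Rightarrow> real \<Rightarrow> real \<Rightarrow> real \<Rightarrow> real \<Rightarrow> real \<Rightarrow> bool" where
  "locally_asymptotically_stable a b p q ye ze \<longleftrightarrow>
     locally_stable a b p q ye ze \<and>
     (\<exists>\<gamma>>0. \<forall>y0 z0. y0 \<ge> 0 \<and> z0 \<ge> 0 \<and> \<bar>y0 - ye\<bar> + \<bar>z0 - ze\<bar> < \<gamma> \<longrightarrow>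
        ((\<lambda>n. fst (sys_orbit a b p q y0 z0 n)) \<longlonglongrightarrow> ye) \<and>
        ((\<lambda>n. snd (sys_orbit a b p q y0 z0 n)) \<longlonglongrightarrow> ze))"

end

theory Submission
  imports Defs
begin


lemma exp_sub_one_abs: "\<bar>exp (x::real) - 1\<bar> \<le> \<bar>x\<bar> * exp \<bar>x\<bar>"
proof (cases "x \<ge> 0")
  case True
  have "exp (-x) \<ge> 1 - x" using exp_ge_add_one_self[of "-x"] by simp
  hence "exp (-x) * exp x \<ge> (1 - x) * exp x" by (simp add: mult_right_mono)
  moreover have "exp (-x) * exp x = 1" by (simp add: exp_add[symmetric])
  ultimately have "1 \<ge> (1 - x) * exp x" by simp
  moreover have "exp x \<ge> 1" using True by simp
  ultimately show ?thesis using True by (simp add: algebra_simps)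
next
  case False
  have "exp x \<ge> 1 + x" using exp_ge_add_one_self[of x] by simp
  moreover have "exp x \<le> 1" using False by simp
  moreover have "exp \<bar>x\<bar> \<ge> 1" by simp
  moreover have "\<bar>x\<bar> \<le> \<bar>x\<bar> * exp \<bar>x\<bar>" using \<open>exp \<bar>x\<bar> \<ge> 1\<close>
    by (metis abs_ge_zero mult_le_cancel_left1 not_le)
  ultimately have "\<bar>exp x - 1\<bar> \<le> \<bar>x\<bar>" using False by linarith
  thus ?thesis using \<open>\<bar>x\<bar> \<le> \<bar>x\<bar> * exp \<bar>x\<bar>\<close> by linarith
qed

lemma upper_eq:
  fixes a b p q y z :: real
  assumes "a > 0" "b > 0" "p > 0" "q > 0" "y > 0" "z > 0"
    and E1: "y * (p + z) = a * z * exp (- y)" and E2: "z * (q + y) = b * y * exp (- z)"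
  shows "y \<le> (a * b - p * q) / (p + b)"
proof -
  have "y * (p + z) \<le> a * z" using E1 assms by (simp add: mult_left_le)
  hence h1: "z * (a - y) \<ge> p * y" by (simp add: algebra_simps)
  have "z * (q + y) \<le> b * y" using E2 assms by (simp add: mult_left_le)
  have ay: "a - y > 0" using h1 assms
    by (smt (verit, best) mult_nonneg_nonpos mult_pos_pos)
  have "p * y * (q + y) \<le> z * (a - y) * (q + y)" using h1 assms by (intro mult_right_mono) auto
  also have "\<dots> = z * (q + y) * (a - y)" by simp
  also have "\<dots> \<le> b * y * (a - y)" using \<open>z * (q + y) \<le> b * y\<close> ay by (intro mult_right_mono) auto
  finally have "y * (p * (q + y)) \<le> y * (b * (a - y))" by (simp add: algebra_simps)
  hence "p * (q + y) \<le> b * (a - y)" using assms by simp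
  hence "y * (p + b) \<le> a * b - p * q" by (simp add: algebra_simps)
  thus ?thesis using assms by (simp add: field_simps)
qed

lemma lower_eq:
  fixes a b p q y z :: real
  assumes "a > 0" "b > 0" "p > 0" "q > 0" "y > 0" "z > 0"
    and E1: "y * (p + z) = a * z * exp (- y)" and E2: "z * (q + y) = b * y * exp (- z)"
  shows "(a * b * exp (- ((a * b - p * q) / (p + b) + (a * b - p * q) / (q + a))) - p * q)
            / (b * exp (- ((a * b - p * q) / (q + a))) + p) \<le> y"
proof -
  define ys where "ys = (a * b - p * q) / (p + b)"
  define zs where "zs = (a * b - p * q) / (q + a)"
  have yb: "y \<le> ys" unfolding ys_def by (rule upper_eq[OF assms])
  have zb: "z \<le> zs" unfolding zs_def using upper_eq[of b a q p z y] assms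
    by (simp add: algebra_simps)
  define a' where "a' = a * exp (- ys)"
  define b' where "b' = b * exp (- zs)"
  have pa': "a' > 0" "b' > 0" using assms by (auto simp: a'_def b'_def)
  have "a * b * exp (- (ys + zs)) = a' * b'" by (simp add: a'_def b'_def exp_add[symmetric])
  have "exp (- ys) \<le> exp (- y)" "exp (- zs) \<le> exp (- z)" using yb zb by auto
  hence "a * z * exp (- ys) \<le> a * z * exp (- y)" "b * y * exp (- zs) \<le> b * y * exp (- z)"
    using assms by (simp_all add: mult_left_mono)
  hence g1: "y * (p + z) \<ge> a' * z" and g2: "z * (q + y) \<ge> b' * y"
    unfolding E1 E2 a'_def b'_def by (simp_all add: ac_simps)
  have key: "y * (b' + p) \<ge> a' * b' - p * q"
  proof (cases "a' \<le> y")
    case True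
    hence "a' * b' \<le> y * b'" using pa' by (simp add: mult_right_mono)
    moreover have "y * p > 0" "p * q > 0" using assms by auto
    ultimately show ?thesis by (simp add: algebra_simps)
  next
    case False
    have h: "z * (a' - y) \<le> p * y" using g1 by (simp add: algebra_simps)
    have "b' * y * (a' - y) \<le> z * (q + y) * (a' - y)" using g2 False by (intro mult_right_mono) auto
    also have "\<dots> = z * (a' - y) * (q + y)" by simp
    also have "\<dots> \<le> p * y * (q + y)" using h assms by (intro mult_right_mono) auto
    finally have "y * (b' * (a' - y)) \<le> y * (p * (q + y))" by (simp add: algebra_simps)
    hence "b' * (a' - y) \<le> p * (q + y)" using assms by simp
    thus ?thesis by (simp add: algebra_simps)
  qed
  show ?thesis
    unfolding ys_def[symmetric] zs_def[symmetric] \<open>a * b * exp (- (ys + zs)) = a' * b'\<close> b'_def[symmetric]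
    using key pa' assms by (subst pos_divide_le_eq) (auto simp: ac_simps)
qed

lemma comp_bound:
  fixes a p ye ze y z N :: real
  assumes "p > 0" "ye > 0" "ze > 0" and E: "ye * (p + ze) = a * ze * exp (- ye)"
    and N: "N \<ge> 0" "N < 1" and hy: "\<bar>y - ye\<bar> \<le> ye * N" and hz: "\<bar>z - ze\<bar> \<le> ze * N"
  shows "\<bar>a * z / (p + z) * exp (- y) - ye\<bar> \<le> ye * N * (exp (ye * N) * (p / (p + ze * (1 - N)) + ye))"
proof -
  define u where "u = y - ye"
  have zlow: "z \<ge> ze * (1 - N)" using hz by (simp add: algebra_simps abs_le_iff)
  have pos1: "ze * (1 - N) \<ge> 0" using assms by simp
  have pz: "p + z \<ge> p + ze * (1 - N)" "p + ze * (1 - N) > 0" using zlow pos1 assms by linarith+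
  have aexp: "a * exp (- ye) = ye * (p + ze) / ze" using E assms by (simp add: field_simps)
  define phi where "phi = z * (p + ze) / (ze * (p + z))"
  have ey: "exp (- y) = exp (- ye) * exp (- u)" by (simp add: u_def exp_add[symmetric])
  have val: "a * z / (p + z) * exp (- y) = ye * (phi * exp (- u))"
  proof -
    have "a * z / (p + z) * exp (- y) = (a * exp (- ye)) * (z / (p + z)) * exp (- u)"
      unfolding ey by simp
    also have "\<dots> = ye * (p + ze) / ze * (z / (p + z)) * exp (- u)" unfolding aexp ..
    also have "\<dots> = ye * (phi * exp (- u))" unfolding phi_def by simp
    finally show ?thesis .
  qed
  have phi1: "phi - 1 = p * (z - ze) / (ze * (p + z))"
  proof -
    have d: "ze * (p + z) \<noteq> 0" using pz assms by auto
    show ?thesis unfolding phi_def using d by (simp add: divide_simps) (simp add: algebra_simps)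
  qed
  have "\<bar>phi - 1\<bar> = p * \<bar>z - ze\<bar> / (ze * (p + z))"
    unfolding phi1 using pz assms by (simp add: abs_mult abs_divide)
  also have "\<dots> \<le> p * (ze * N) / (ze * (p + z))"
    using hz assms pz by (intro divide_right_mono mult_left_mono) auto
  also have "\<dots> = p * N / (p + z)" using assms by simp
  also have "\<dots> \<le> p * N / (p + ze * (1 - N))"
    using pz assms N by (intro divide_left_mono) auto
  finally have phib: "\<bar>phi - 1\<bar> \<le> p * N / (p + ze * (1 - N))" .
  have ub: "\<bar>u\<bar> \<le> ye * N" using hy u_def by simp
  have eu: "exp \<bar>u\<bar> \<le> exp (ye * N)" using ub by simp
  have "exp (- u) \<le> exp \<bar>u\<bar>" by simp
  have "\<bar>phi * exp (- u) - 1\<bar> = \<bar>(phi - 1) * exp (- u) + (exp (- u) - 1)\<bar>"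
    by (simp add: algebra_simps)
  also have "\<dots> \<le> \<bar>phi - 1\<bar> * exp (- u) + \<bar>exp (- u) - 1\<bar>"
    by (metis abs_exp_cancel abs_mult abs_triangle_ineq)
  also have "\<dots> \<le> (p * N / (p + ze * (1 - N))) * exp (ye * N) + \<bar>u\<bar> * exp \<bar>u\<bar>"
  proof (rule add_mono)
    show "\<bar>phi - 1\<bar> * exp (- u) \<le> p * N / (p + ze * (1 - N)) * exp (ye * N)"
      using phib \<open>exp (- u) \<le> exp \<bar>u\<bar>\<close> eu by (intro mult_mono) auto
    show "\<bar>exp (- u) - 1\<bar> \<le> \<bar>u\<bar> * exp \<bar>u\<bar>" using exp_sub_one_abs[of "-u"] by simp
  qed
  also have "\<dots> \<le> (p * N / (p + ze * (1 - N))) * exp (ye * N) + (ye * N) * exp (ye * N)"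
    using ub eu assms N by (intro add_left_mono mult_mono) auto
  also have "\<dots> = N * (exp (ye * N) * (p / (p + ze * (1 - N)) + ye))"
    by (simp add: field_simps)
  finally have "\<bar>phi * exp (- u) - 1\<bar> \<le> N * (exp (ye * N) * (p / (p + ze * (1 - N)) + ye))" .
  hence "ye * \<bar>phi * exp (- u) - 1\<bar> \<le> ye * (N * (exp (ye * N) * (p / (p + ze * (1 - N)) + ye)))"
    using assms by (simp add: mult_left_mono)
  moreover have "\<bar>a * z / (p + z) * exp (- y) - ye\<bar> = ye * \<bar>phi * exp (- u) - 1\<bar>"
  proof -
    have "ye * (phi * exp (- u)) - ye = ye * (phi * exp (- u) - 1)" by (simp add: algebra_simps)
    thus ?thesis unfolding val using assms by (simp add: abs_mult)
  qed
  ultimately show ?thesis by (simp add: mult.assoc)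
qed



lemma orbit_Suc: "sys_orbit a b p q y0 z0 (Suc n) = sys_step a b p q (sys_orbit a b p q y0 z0 n)"
  by (simp add: sys_orbit_def)

lemma orbit_0: "sys_orbit a b p q y0 z0 0 = (y0, z0)"
  by (simp add: sys_orbit_def)

lemma tendsto_bound:
  fixes X g :: "nat \<Rightarrow> real"
  assumes "\<And>n. \<bar>X n - L\<bar> \<le> g n" "g \<longlonglongrightarrow> 0"
  shows "X \<longlonglongrightarrow> L"
proof (rule tendsto_sandwich[of "\<lambda>n. L - g n" X sequentially "\<lambda>n. L + g n"])
  show "\<forall>\<^sub>F n in sequentially. L - g n \<le> X n" using assms(1) by (auto simp: abs_le_iff algebra_simps)
  show "\<forall>\<^sub>F n in sequentially. X n \<le> L + g n" using assms(1) by (auto simp: abs_le_iff algebra_simps)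
  show "(\<lambda>n. L - g n) \<longlonglongrightarrow> L" using tendsto_diff[OF tendsto_const assms(2), of L] by simp
  show "(\<lambda>n. L + g n) \<longlonglongrightarrow> L" using tendsto_add[OF tendsto_const assms(2), of L] by simp
qed

lemma part1:
  fixes a b p q :: real
  assumes "a > 0" "b > 0" "p > 0" "q > 0" "a / p < 1" "b / q < 1"
  shows "locally_asymptotically_stable a b p q 0 0"
proof -
  define c where "c = max (a / p) (b / q)"
  have "a / p > 0" using assms by simp
  hence c: "c > 0" "c < 1" using assms by (auto simp: c_def less_max_iff_disj)
  have stp: "fst (sys_step a b p q (y, z)) \<ge> 0 \<and> snd (sys_step a b p q (y, z)) \<ge> 0 \<and>
      fst (sys_step a b p q (y, z)) + snd (sys_step a b p q (y, z)) \<le> c * (y + z)"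
    if "y \<ge> 0" "z \<ge> 0" for y z
  proof -
    have "a * z / (p + z) \<le> a * z / p" using that assms by (intro divide_left_mono) auto
    also have "\<dots> = (a / p) * z" by simp
    also have "\<dots> \<le> c * z" using that by (intro mult_right_mono) (auto simp: c_def)
    finally have h1: "a * z / (p + z) \<le> c * z" .
    have "b * y / (q + y) \<le> b * y / q" using that assms by (intro divide_left_mono) auto
    also have "\<dots> = (b / q) * y" by simp
    also have "\<dots> \<le> c * y" using that by (intro mult_right_mono) (auto simp: c_def)
    finally have h2: "b * y / (q + y) \<le> c * y" .
    have n1: "a * z / (p + z) \<ge> 0" "b * y / (q + y) \<ge> 0" using that assms by auto
    have "a * z / (p + z) * exp (- y) \<le> a * z / (p + z) * 1" using n1 that by (intro mult_left_mono) auto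
    hence "a * z / (p + z) * exp (- y) \<le> a * z / (p + z)" by (simp only: mult_1_right)
    moreover have "b * y / (q + y) * exp (- z) \<le> b * y / (q + y) * 1" using n1 that by (intro mult_left_mono) auto
    hence "b * y / (q + y) * exp (- z) \<le> b * y / (q + y)" by (simp only: mult_1_right)
    moreover have "a * z / (p + z) * exp (- y) \<ge> 0" "b * y / (q + y) * exp (- z) \<ge> 0" using n1 by (simp_all add: mult_nonneg_nonneg del: times_divide_eq_left)
    ultimately show ?thesis using h1 h2 unfolding sys_step_def fst_conv snd_conv distrib_left by (intro conjI; linarith)
  qed
  have orb: "fst (sys_orbit a b p q y0 z0 n) \<ge> 0 \<and> snd (sys_orbit a b p q y0 z0 n) \<ge> 0 \<and>
      fst (sys_orbit a b p q y0 z0 n) + snd (sys_orbit a b p q y0 z0 n) \<le> c ^ n * (y0 + z0)"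
    if "y0 \<ge> 0" "z0 \<ge> 0" for y0 z0 n
  proof (induction n)
    case 0 then show ?case using that by (simp add: orbit_0)
  next
    case (Suc n)
    obtain y z where yz: "sys_orbit a b p q y0 z0 n = (y, z)" by (cases "sys_orbit a b p q y0 z0 n")
    have "y \<ge> 0" "z \<ge> 0" "y + z \<le> c ^ n * (y0 + z0)" using Suc yz by auto
    with stp[of y z] have "fst (sys_step a b p q (y, z)) \<ge> 0 \<and> snd (sys_step a b p q (y, z)) \<ge> 0 \<and>
      fst (sys_step a b p q (y, z)) + snd (sys_step a b p q (y, z)) \<le> c * (c ^ n * (y0 + z0))"
      using c by (meson mult_left_mono less_imp_le order_trans)
    then show ?case by (simp add: orbit_Suc yz)
  qed
  have cn: "c ^ n \<le> 1" for n using c by (simp add: power_le_one)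
  show ?thesis unfolding locally_asymptotically_stable_def locally_stable_def
  proof (intro conjI)
    show "\<forall>\<epsilon>>0. \<exists>\<delta>>0. \<forall>y0 z0. y0 \<ge> 0 \<and> z0 \<ge> 0 \<and> \<bar>y0 - 0\<bar> + \<bar>z0 - 0\<bar> < \<delta> \<longrightarrow>
        (\<forall>n. \<bar>fst (sys_orbit a b p q y0 z0 n) - 0\<bar> + \<bar>snd (sys_orbit a b p q y0 z0 n) - 0\<bar> < \<epsilon>)"
    proof (intro allI impI)
      fix \<epsilon> :: real assume "\<epsilon> > 0"
      show "\<exists>\<delta>>0. \<forall>y0 z0. y0 \<ge> 0 \<and> z0 \<ge> 0 \<and> \<bar>y0 - 0\<bar> + \<bar>z0 - 0\<bar> < \<delta> \<longrightarrow>
        (\<forall>n. \<bar>fst (sys_orbit a b p q y0 z0 n) - 0\<bar> + \<bar>snd (sys_orbit a b p q y0 z0 n) - 0\<bar> < \<epsilon>)"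
      proof (intro exI[of _ \<epsilon>] conjI allI impI)
        fix y0 z0 :: real and n
        assume h: "y0 \<ge> 0 \<and> z0 \<ge> 0 \<and> \<bar>y0 - 0\<bar> + \<bar>z0 - 0\<bar> < \<epsilon>"
        have "c ^ n * (y0 + z0) \<le> 1 * (y0 + z0)" using cn h by (intro mult_right_mono) auto
        thus "\<bar>fst (sys_orbit a b p q y0 z0 n) - 0\<bar> + \<bar>snd (sys_orbit a b p q y0 z0 n) - 0\<bar> < \<epsilon>"
          using orb[of y0 z0 n] h by auto
      qed (use \<open>\<epsilon> > 0\<close> in auto)
    qed
    show "\<exists>\<gamma>>0. \<forall>y0 z0. y0 \<ge> 0 \<and> z0 \<ge> 0 \<and> \<bar>y0 - 0\<bar> + \<bar>z0 - 0\<bar> < \<gamma> \<longrightarrow>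
        ((\<lambda>n. fst (sys_orbit a b p q y0 z0 n)) \<longlonglongrightarrow> 0) \<and>
        ((\<lambda>n. snd (sys_orbit a b p q y0 z0 n)) \<longlonglongrightarrow> 0)"
    proof (intro exI[of _ 1] conjI allI impI)
      fix y0 z0 :: real
      assume h: "y0 \<ge> 0 \<and> z0 \<ge> 0 \<and> \<bar>y0 - 0\<bar> + \<bar>z0 - 0\<bar> < 1"
      have g: "(\<lambda>n. c ^ n * (y0 + z0)) \<longlonglongrightarrow> 0"
      proof -
        have "(\<lambda>n. c ^ n) \<longlonglongrightarrow> 0" by (rule LIMSEQ_power_zero) (use c in simp)
        thus ?thesis by (rule tendsto_mult_left_zero)
      qed
      show "(\<lambda>n. fst (sys_orbit a b p q y0 z0 n)) \<longlonglongrightarrow> 0"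
        by (rule tendsto_bound[OF _ g]) (use orb[of y0 z0] h in \<open>auto simp del: power_mult_distrib, smt (verit)\<close>)
      show "(\<lambda>n. snd (sys_orbit a b p q y0 z0 n)) \<longlonglongrightarrow> 0"
        by (rule tendsto_bound[OF _ g]) (use orb[of y0 z0] h in \<open>auto simp del: power_mult_distrib, smt (verit)\<close>)
    qed simp
  qed
qed

lemma K_mono:
  fixes p ye ze N r :: real
  assumes "p > 0" "ye > 0" "ze > 0" "0 \<le> N" "N \<le> r" "r < 1"
  shows "exp (ye * N) * (p / (p + ze * (1 - N)) + ye) \<le> exp (ye * r) * (p / (p + ze * (1 - r)) + ye)"
proof (rule mult_mono)
  show "exp (ye * N) \<le> exp (ye * r)" using assms by (simp add: mult_left_mono)
  have "ze * (1 - r) \<le> ze * (1 - N)" using assms by (intro mult_left_mono) auto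
  moreover have "ze * (1 - r) > 0" using assms by simp
  have "ze * (1 - N) > 0" "ze * (1 - r) > 0" using assms by simp_all
  hence d1: "p + ze * (1 - N) > 0" "p + ze * (1 - r) > 0" using assms by linarith+
  have "p / (p + ze * (1 - N)) \<le> p / (p + ze * (1 - r))"
    using divide_left_mono[of "p + ze * (1 - r)" "p + ze * (1 - N)" p] mult_pos_pos[OF d1(1) d1(2)]
      assms \<open>ze * (1 - r) \<le> ze * (1 - N)\<close> by simp
  thus "p / (p + ze * (1 - N)) + ye \<le> p / (p + ze * (1 - r)) + ye" by simp
  show "0 \<le> p / (p + ze * (1 - N)) + ye" using assms d1 by (simp add: add_nonneg_nonneg)
  show "0 \<le> exp (ye * r)" by simp
qed

lemma K_exists:
  fixes p ye ze :: real
  assumes "p > 0" "ye > 0" "ze > 0" "p / (p + ze) + ye < 1"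
  shows "\<forall>\<^sub>F N in at_right 0. exp (ye * N) * (p / (p + ze * (1 - N)) + ye) < 1"
proof -
  have "((\<lambda>N. exp (ye * N) * (p / (p + ze * (1 - N)) + ye)) \<longlongrightarrow>
          exp (ye * 0) * (p / (p + ze * (1 - 0)) + ye)) (at_right 0)"
    using assms by (intro tendsto_intros) auto
  hence "((\<lambda>N. exp (ye * N) * (p / (p + ze * (1 - N)) + ye)) \<longlongrightarrow> p / (p + ze) + ye) (at_right 0)"
    by simp
  from order_tendstoD(2)[OF this assms(4)] show ?thesis .
qed

lemma part2:
  fixes a b p q ye ze :: real
  assumes "a > 0" "b > 0" "p > 0" "q > 0" "ye > 0" "ze > 0"
    and E1: "ye * (p + ze) = a * ze * exp (- ye)" and E2: "ze * (q + ye) = b * ye * exp (- ze)"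
    and A: "a * exp (- ye) < 1" and B: "b * exp (- ze) < 1"
  shows "locally_asymptotically_stable a b p q ye ze"
proof -
  define K1 where "K1 = (\<lambda>N. exp (ye * N) * (p / (p + ze * (1 - N)) + ye))"
  define K2 where "K2 = (\<lambda>N. exp (ze * N) * (q / (q + ye * (1 - N)) + ze))"
  have "ye * (p + ze) = (a * exp (- ye)) * ze" using E1 by simp
  also have "\<dots> < 1 * ze" using A assms by (intro mult_strict_right_mono) auto
  finally have "ye * (p + ze) < ze" by simp
  hence k10: "p / (p + ze) + ye < 1" using assms by (simp add: field_simps)
  have "ze * (q + ye) = (b * exp (- ze)) * ye" using E2 by simp
  also have "\<dots> < 1 * ye" using B assms by (intro mult_strict_right_mono) auto
  finally have "ze * (q + ye) < ye" by simp
  hence k20: "q / (q + ye) + ze < 1" using assms by (simp add: field_simps)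
  have ev: "\<forall>\<^sub>F N in at_right 0. K1 N < 1 \<and> K2 N < 1 \<and> N < (1::real)"
  proof -
    have e3: "\<forall>\<^sub>F N in at_right 0. N < (1::real)"
      unfolding eventually_at_right_field by (intro exI[of _ 1]) auto
    show ?thesis
      using eventually_conj[OF K_exists[OF assms(3,5,6) k10] eventually_conj[OF K_exists[OF assms(4,6,5) k20] e3]]
      unfolding K1_def K2_def .
  qed
  then obtain r0 :: real where r0: "r0 > 0" "\<forall>N>0. N < r0 \<longrightarrow> K1 N < 1 \<and> K2 N < 1 \<and> N < 1"
    unfolding eventually_at_right_field by auto
  define \<rho> where "\<rho> = r0 / 2"
  have "\<rho> > 0" "\<rho> < r0" using r0 by (auto simp: \<rho>_def)
  hence rho: "\<rho> > 0" "K1 \<rho> < 1" "K2 \<rho> < 1" "\<rho> < 1" using r0(2) by blast+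
  define \<kappa> where "\<kappa> = max (K1 \<rho>) (K2 \<rho>)"
  have kap: "\<kappa> < 1" "\<kappa> \<ge> 0" using rho assms by (auto simp: \<kappa>_def K1_def le_max_iff_disj)
  define V where "V = (\<lambda>(y::real, z::real). max (\<bar>y - ye\<bar> / ye) (\<bar>z - ze\<bar> / ze))"
  have V0: "V x \<ge> 0" for x using assms by (cases x) (auto simp: V_def le_max_iff_disj)
  have Vb: "\<bar>y - ye\<bar> \<le> ye * V (y, z)" "\<bar>z - ze\<bar> \<le> ze * V (y, z)" for y z
  proof -
    have "\<bar>y - ye\<bar> = ye * (\<bar>y - ye\<bar> / ye)" "\<bar>z - ze\<bar> = ze * (\<bar>z - ze\<bar> / ze)" using assms by simp_all
    moreover have "ye * (\<bar>y - ye\<bar> / ye) \<le> ye * V (y, z)" "ze * (\<bar>z - ze\<bar> / ze) \<le> ze * V (y, z)"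
      using assms by (intro mult_left_mono; simp add: V_def)+
    ultimately show "\<bar>y - ye\<bar> \<le> ye * V (y, z)" "\<bar>z - ze\<bar> \<le> ze * V (y, z)" by simp_all
  qed
  have stepV: "V (sys_step a b p q (y, z)) \<le> \<kappa> * V (y, z)" if "V (y, z) \<le> \<rho>" for y z
  proof -
    define N where "N = V (y, z)"
    have N: "N \<ge> 0" "N < 1" "N \<le> \<rho>" using V0 that rho by (auto simp: N_def)
    have "\<bar>a * z / (p + z) * exp (- y) - ye\<bar> \<le> ye * N * K1 N"
      unfolding K1_def by (rule comp_bound[OF assms(3,5,6) E1 N(1,2)]) (use Vb N_def in auto)
    also have "\<dots> \<le> ye * N * \<kappa>"
      using K_mono[OF assms(3,5,6) N(1,3) rho(4)] N assms
      by (intro mult_left_mono) (auto simp: K1_def \<kappa>_def le_max_iff_disj)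
    finally have h1: "\<bar>a * z / (p + z) * exp (- y) - ye\<bar> / ye \<le> \<kappa> * N"
      using assms by (simp add: divide_simps mult.commute mult.left_commute)
    have "\<bar>b * y / (q + y) * exp (- z) - ze\<bar> \<le> ze * N * K2 N"
      unfolding K2_def by (rule comp_bound[OF assms(4,6,5) E2 N(1,2)]) (use Vb N_def in auto)
    also have "\<dots> \<le> ze * N * \<kappa>"
      using K_mono[OF assms(4,6,5) N(1,3) rho(4)] N assms
      by (intro mult_left_mono) (auto simp: K2_def \<kappa>_def le_max_iff_disj)
    finally have h2: "\<bar>b * y / (q + y) * exp (- z) - ze\<bar> / ze \<le> \<kappa> * N"
      using assms by (simp add: divide_simps mult.commute mult.left_commute)
    show ?thesis using h1 h2 unfolding N_def by (simp add: V_def sys_step_def)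
  qed
  have orbV: "V (sys_orbit a b p q y0 z0 n) \<le> \<kappa> ^ n * V (y0, z0)" if "V (y0, z0) \<le> \<rho>" for y0 z0 n
  proof (induction n)
    case 0 then show ?case by (simp add: orbit_0)
  next
    case (Suc n)
    obtain y z where yz: "sys_orbit a b p q y0 z0 n = (y, z)" by (cases "sys_orbit a b p q y0 z0 n")
    have "\<kappa> ^ n \<le> 1" using kap by (simp add: power_le_one)
    hence "\<kappa> ^ n * V (y0, z0) \<le> V (y0, z0)" by (rule mult_left_le_one_le[OF V0 zero_le_power[OF kap(2)]])
    hence "V (y, z) \<le> \<rho>" using Suc yz that by simp
    hence "V (sys_step a b p q (y, z)) \<le> \<kappa> * V (y, z)" by (rule stepV)
    also have "\<dots> \<le> \<kappa> * (\<kappa> ^ n * V (y0, z0))" using Suc yz kap by (simp add: mult_left_mono)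
    finally show ?case by (simp add: orbit_Suc yz)
  qed
  define m where "m = min ye ze"
  have m: "m > 0" "m \<le> ye" "m \<le> ze" using assms by (auto simp: m_def)
  have Vup: "V (y, z) \<le> (\<bar>y - ye\<bar> + \<bar>z - ze\<bar>) / m" for y z
  proof -
    have "\<bar>y - ye\<bar> / ye \<le> \<bar>y - ye\<bar> / m" using m by (intro divide_left_mono) auto
    moreover have "\<bar>z - ze\<bar> / ze \<le> \<bar>z - ze\<bar> / m" using m by (intro divide_left_mono) auto
    moreover have "\<bar>y - ye\<bar> / m \<le> (\<bar>y - ye\<bar> + \<bar>z - ze\<bar>) / m"
      "\<bar>z - ze\<bar> / m \<le> (\<bar>y - ye\<bar> + \<bar>z - ze\<bar>) / m" using m by (auto intro: divide_right_mono)
    ultimately show ?thesis by (simp add: V_def)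
  qed
  have L1: "\<bar>y - ye\<bar> + \<bar>z - ze\<bar> \<le> (ye + ze) * V (y, z)" for y z
  proof -
    have "\<bar>y - ye\<bar> \<le> ye * V (y, z)" "\<bar>z - ze\<bar> \<le> ze * V (y, z)" by (rule Vb)+
    thus ?thesis by (simp add: distrib_right)
  qed
  show ?thesis unfolding locally_asymptotically_stable_def locally_stable_def
  proof (intro conjI allI impI)
    fix \<epsilon> :: real assume "\<epsilon> > 0"
    define \<delta> where "\<delta> = min (\<rho> * m) (\<epsilon> * m / (ye + ze))"
    have "\<delta> > 0" using \<open>\<epsilon> > 0\<close> rho m assms by (simp add: \<delta>_def)
    show "\<exists>\<delta>>0. \<forall>y0 z0. y0 \<ge> 0 \<and> z0 \<ge> 0 \<and> \<bar>y0 - ye\<bar> + \<bar>z0 - ze\<bar> < \<delta> \<longrightarrow>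
        (\<forall>n. \<bar>fst (sys_orbit a b p q y0 z0 n) - ye\<bar> + \<bar>snd (sys_orbit a b p q y0 z0 n) - ze\<bar> < \<epsilon>)"
    proof (intro exI[of _ \<delta>] conjI allI impI)
      fix y0 z0 :: real and n
      assume h: "y0 \<ge> 0 \<and> z0 \<ge> 0 \<and> \<bar>y0 - ye\<bar> + \<bar>z0 - ze\<bar> < \<delta>"
      have "V (y0, z0) < \<delta> / m" using Vup[of y0 z0] h m by (smt (verit) divide_strict_right_mono)
      moreover have "\<delta> \<le> \<rho> * m" "\<delta> \<le> \<epsilon> / (ye + ze) * m" by (auto simp: \<delta>_def)
      hence "\<delta> / m \<le> \<rho>" "\<delta> / m \<le> \<epsilon> / (ye + ze)" using m by (simp_all add: pos_divide_le_eq)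
      ultimately have v1: "V (y0, z0) < \<rho>" "V (y0, z0) < \<epsilon> / (ye + ze)" by linarith+
      obtain y z where yz: "sys_orbit a b p q y0 z0 n = (y, z)" by (cases "sys_orbit a b p q y0 z0 n")
      have "\<kappa> ^ n \<le> 1" using kap by (simp add: power_le_one)
      hence "\<kappa> ^ n * V (y0, z0) \<le> V (y0, z0)" by (rule mult_left_le_one_le[OF V0 zero_le_power[OF kap(2)]])
      hence "V (y, z) < \<epsilon> / (ye + ze)" using orbV[of y0 z0 n] v1 yz by simp
      hence "(ye + ze) * V (y, z) < \<epsilon>" using assms by (simp add: field_simps)
      thus "\<bar>fst (sys_orbit a b p q y0 z0 n) - ye\<bar> + \<bar>snd (sys_orbit a b p q y0 z0 n) - ze\<bar> < \<epsilon>"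
        using L1[of y z] yz by simp
    qed (use \<open>\<delta> > 0\<close> in auto)
  next
    show "\<exists>\<gamma>>0. \<forall>y0 z0. y0 \<ge> 0 \<and> z0 \<ge> 0 \<and> \<bar>y0 - ye\<bar> + \<bar>z0 - ze\<bar> < \<gamma> \<longrightarrow>
        ((\<lambda>n. fst (sys_orbit a b p q y0 z0 n)) \<longlonglongrightarrow> ye) \<and>
        ((\<lambda>n. snd (sys_orbit a b p q y0 z0 n)) \<longlonglongrightarrow> ze)"
    proof (intro exI[of _ "\<rho> * m"] conjI allI impI)
      fix y0 z0 :: real
      assume h: "y0 \<ge> 0 \<and> z0 \<ge> 0 \<and> \<bar>y0 - ye\<bar> + \<bar>z0 - ze\<bar> < \<rho> * m"
      have "V (y0, z0) < \<rho>" using Vup[of y0 z0] h m by (smt (verit) divide_strict_right_mono nonzero_mult_div_cancel_right)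
      hence vo: "V (sys_orbit a b p q y0 z0 n) \<le> \<kappa> ^ n * V (y0, z0)" for n using orbV by simp
      have kn: "(\<lambda>n. \<kappa> ^ n) \<longlonglongrightarrow> 0" by (rule LIMSEQ_power_zero) (use kap in simp)
      have g1: "(\<lambda>n. ye * (\<kappa> ^ n * V (y0, z0))) \<longlonglongrightarrow> 0"
        using tendsto_mult_right_zero[OF tendsto_mult_left_zero[OF kn]] by simp
      have g2: "(\<lambda>n. ze * (\<kappa> ^ n * V (y0, z0))) \<longlonglongrightarrow> 0"
        using tendsto_mult_right_zero[OF tendsto_mult_left_zero[OF kn]] by simp
      show "(\<lambda>n. fst (sys_orbit a b p q y0 z0 n)) \<longlonglongrightarrow> ye"
      proof (rule tendsto_bound[OF _ g1])
        fix n
        obtain y z where yz: "sys_orbit a b p q y0 z0 n = (y, z)" by (cases "sys_orbit a b p q y0 z0 n")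
        have "\<bar>y - ye\<bar> \<le> ye * V (y, z)" by (rule Vb)
        also have "\<dots> \<le> ye * (\<kappa> ^ n * V (y0, z0))" using vo[of n] yz assms by (simp add: mult_left_mono)
        finally show "\<bar>fst (sys_orbit a b p q y0 z0 n) - ye\<bar> \<le> ye * (\<kappa> ^ n * V (y0, z0))" using yz by simp
      qed
      show "(\<lambda>n. snd (sys_orbit a b p q y0 z0 n)) \<longlonglongrightarrow> ze"
      proof (rule tendsto_bound[OF _ g2])
        fix n
        obtain y z where yz: "sys_orbit a b p q y0 z0 n = (y, z)" by (cases "sys_orbit a b p q y0 z0 n")
        have "\<bar>z - ze\<bar> \<le> ze * V (y, z)" by (rule Vb)
        also have "\<dots> \<le> ze * (\<kappa> ^ n * V (y0, z0))" using vo[of n] yz assms by (simp add: mult_left_mono)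
        finally show "\<bar>snd (sys_orbit a b p q y0 z0 n) - ze\<bar> \<le> ze * (\<kappa> ^ n * V (y0, z0))" using yz by simp
      qed
    qed (use rho m in simp)
  qed
qed


theorem theorem3p2:
  fixes a b p q :: real
  assumes "a > 0" and "b > 0" and "p > 0" and "q > 0"
  shows "(a / p < 1 \<and> b / q < 1 \<longrightarrow> locally_asymptotically_stable a b p q 0 0)
    \<and> (a * b > p * q \<longrightarrow>
        (let ys = (a * b - p * q) / (p + b);
             zs = (a * b - p * q) / (q + a);
             yl = (a * b * exp (- (ys + zs)) - p * q) / (b * exp (- zs) + p);
             zl = (a * b * exp (- (ys + zs)) - p * q) / (a * exp (- ys) + q)
         in exp yl > a \<and> exp zl > b \<longrightarrow>
            (\<forall>ye ze. ye > 0 \<and> ze > 0 \<and> is_equilibrium a b p q ye ze \<longrightarrow>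
               locally_asymptotically_stable a b p q ye ze)))"
proof (intro conjI impI)
  assume "a / p < 1 \<and> b / q < 1"
  thus "locally_asymptotically_stable a b p q 0 0" using part1 assms by blast
next
  assume "a * b > p * q"
  show "let ys = (a * b - p * q) / (p + b);
             zs = (a * b - p * q) / (q + a);
             yl = (a * b * exp (- (ys + zs)) - p * q) / (b * exp (- zs) + p);
             zl = (a * b * exp (- (ys + zs)) - p * q) / (a * exp (- ys) + q)
         in exp yl > a \<and> exp zl > b \<longrightarrow>
            (\<forall>ye ze. ye > 0 \<and> ze > 0 \<and> is_equilibrium a b p q ye ze \<longrightarrow>
               locally_asymptotically_stable a b p q ye ze)"
    unfolding Let_def
  proof (intro impI allI)
    fix ye ze :: real
    assume hl: "a < exp ((a * b * exp (- ((a * b - p * q) / (p + b) + (a * b - p * q) / (q + a))) - p * q)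
                 / (b * exp (- ((a * b - p * q) / (q + a))) + p)) \<and>
           b < exp ((a * b * exp (- ((a * b - p * q) / (p + b) + (a * b - p * q) / (q + a))) - p * q)
                 / (a * exp (- ((a * b - p * q) / (p + b))) + q))"
    assume he: "ye > 0 \<and> ze > 0 \<and> is_equilibrium a b p q ye ze"
    have pos: "ye > 0" "ze > 0" using he by auto
    have E1: "ye * (p + ze) = a * ze * exp (- ye)"
    proof -
      have "ye = a * ze / (p + ze) * exp (- ye)" using he by (simp add: is_equilibrium_def)
      thus ?thesis using pos assms by (simp add: field_simps)
    qed
    have E2: "ze * (q + ye) = b * ye * exp (- ze)"
    proof -
      have "ze = b * ye / (q + ye) * exp (- ze)" using he by (simp add: is_equilibrium_def)
      thus ?thesis using pos assms by (simp add: field_simps)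
    qed
    note l1 = lower_eq[OF assms pos E1 E2]
    note l2 = lower_eq[OF assms(2,1,4,3) pos(2,1) E2 E1]
    have l2': "(a * b * exp (- ((a * b - p * q) / (p + b) + (a * b - p * q) / (q + a))) - p * q)
                 / (a * exp (- ((a * b - p * q) / (p + b))) + q) \<le> ze"
      using l2 by (simp add: ac_simps)
    have "a < exp ye" using hl l1 by (meson exp_le_cancel_iff less_le_trans)
    hence A: "a * exp (- ye) < 1"
      by (metis exp_gt_zero exp_minus_inverse mult.commute mult_less_cancel_left_pos)
    have "b < exp ze" using hl l2' by (meson exp_le_cancel_iff less_le_trans)
    hence B: "b * exp (- ze) < 1"
      by (metis exp_gt_zero exp_minus_inverse mult.commute mult_less_cancel_left_pos)
    show "locally_asymptotically_stable a b p q ye ze"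
      by (rule part2[OF assms pos E1 E2 A B])
  qed
qed

end
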